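(* Let $P, A, B, C$ be points in the Euclidean plane, let $r>0$ and let $Z=\{Q:|PQ|\le r\}$. For a point $Q\notin\{A,B,C\}$, consider the three angles around $Q$ formed by consecutive rays among $QA,QB,QC$ in counterclockwise order (these three angles sum to $2\pi$). Let $P^*\in Z$ be a solution of the Max-Min-Angle problem, i.e. a point of $Z$ maximizing, over $Q\in Z$, the smallest of the angles $\angle AQB,\angle BQC,\angle CQA$ (non-reflex angles in $[0,\pi]$). Suppose that at $P^*$ there are exactly two smallest angles, i.e. two of the three consecutive angles around $P^*$ are equal and strictly smaller than the third. Then $P^*$ lies on the boundary circle $\{Q:|PQ|=r\}$ of $Z$.
   Context: Context: $P$ is the position of a degree-three vertex of a graph drawn with straight-line edges, $A,B,C$ the positions of its neighbours, and $r$ the maximum allowed displacement. *)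

theory Defs
  imports Complex_Main
begin

(* Points of the Euclidean plane are modelled as complex numbers. *)

text \<open>Non-reflex angle AQB in [0, pi] between rays QA and QB.
  (Degenerate convention: if Q = A or Q = B the value is 0.)\<close>
definition ang :: "complex \<Rightarrow> complex \<Rightarrow> complex \<Rightarrow> real" where
  "ang A Q B = \<bar>Arg ((B - Q) / (A - Q))\<bar>"

definition ccw_ang :: "complex \<Rightarrow> complex \<Rightarrow> complex \<Rightarrow> real" where
  "ccw_ang Q X Y = (let t = Arg ((Y - Q) / (X - Q)) in if t < 0 then t + 2 * pi else t)"

text \<open>If A, B, C are seen in ccw order
  from Q these are the ccw angles A->B, B->C, C->A; otherwise A->C, C->B, B->A.\<close>
definition consec_angles :: "complex \<Rightarrow> complex \<Rightarrow> complex \<Rightarrow> complex \<Rightarrow> real \<times> real \<times> real" where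
  "consec_angles Q A B C =
     (if ccw_ang Q A B + ccw_ang Q B C + ccw_ang Q C A = 2 * pi
      then (ccw_ang Q A B, ccw_ang Q B C, ccw_ang Q C A)
      else (ccw_ang Q A C, ccw_ang Q C B, ccw_ang Q B A))"

definition exactly_two_smallest :: "real \<times> real \<times> real \<Rightarrow> bool" where
  "exactly_two_smallest t = (case t of (x, y, z) \<Rightarrow>
      (x = y \<and> x < z) \<or> (y = z \<and> y < x) \<or> (x = z \<and> x < y))"

definition min_angle :: "complex \<Rightarrow> complex \<Rightarrow> complex \<Rightarrow> complex \<Rightarrow> real" where
  "min_angle Q A B C = min (ang A Q B) (min (ang B Q C) (ang C Q A))"

end

theory Submission
  imports Defs "HOL-Analysis.Analysis"
begin


lemma ccw_range: "0 \<le> ccw_ang Q X Y \<and> ccw_ang Q X Y < 2*pi"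
  using Arg_bounded[of "(Y - Q) / (X - Q)"] by (auto simp: ccw_ang_def Let_def)

lemma ang_ccw: "ang X Q Y = min (ccw_ang Q X Y) (2*pi - ccw_ang Q X Y)"
  using Arg_bounded[of "(Y - Q) / (X - Q)"] by (auto simp: ccw_ang_def ang_def Let_def)

lemma ccw_swap: "ccw_ang Q Y X = (if ccw_ang Q X Y = 0 then 0 else 2*pi - ccw_ang Q X Y)"
proof -
  have e: "(X - Q) / (Y - Q) = inverse ((Y - Q) / (X - Q))" by simp
  define z where "z = (Y - Q) / (X - Q)"
  have b: "- pi < Arg z \<and> Arg z \<le> pi" using Arg_bounded by blast
  have r: "z \<in> \<real> \<longleftrightarrow> Arg z = 0 \<or> Arg z = pi" using Arg_eq_0_pi by blast
  show ?thesis unfolding ccw_ang_def Let_def e z_def[symmetric] Arg_inverse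
    using b r by auto
qed

lemma ang_sym: "ang X Q Y = ang Y Q X"
  unfolding ang_ccw using ccw_swap[of Q Y X] ccw_range[of Q X Y] by auto

lemma ccw_sum:
  assumes "Q \<notin> {A, B, C}"
  shows "ccw_ang Q A B + ccw_ang Q B C + ccw_ang Q C A \<in> {0, 2*pi, 4*pi}"
proof -
  define u where "u = (B - Q) / (A - Q)"
  define v where "v = (C - Q) / (B - Q)"
  define w where "w = (A - Q) / (C - Q)"
  have nz: "u \<noteq> 0" "v \<noteq> 0" "w \<noteq> 0" using assms by (auto simp: u_def v_def w_def)
  have d: "A - Q \<noteq> 0" "B - Q \<noteq> 0" "C - Q \<noteq> 0" using assms by auto
  have "u * v * w = 1" using d by (simp add: u_def v_def w_def)
  hence "cis (Arg u + Arg v + Arg w) = 1"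
    using nz by (simp add: cis_mult[symmetric] cis_Arg sgn_mult[symmetric])
  hence "cos (Arg u + Arg v + Arg w) = 1" by (metis cis.sel(1) one_complex.sel(1))
  then obtain n :: int where n: "Arg u + Arg v + Arg w = real_of_int n * 2 * pi"
    using cos_one_2pi_int by blast
  define S where "S = ccw_ang Q A B + ccw_ang Q B C + ccw_ang Q C A"
  have "\<exists>m::int. S = Arg u + Arg v + Arg w + real_of_int m * 2 * pi"
  proof -
    have "\<exists>k::int. ccw_ang Q A B = Arg u + real_of_int k*2*pi" unfolding ccw_ang_def Let_def u_def
      by (metis add_0_right mult_1 mult_zero_left of_int_0 of_int_1)
    moreover have "\<exists>k::int. ccw_ang Q B C = Arg v + real_of_int k*2*pi" unfolding ccw_ang_def Let_def v_def
      by (metis add_0_right mult_1 mult_zero_left of_int_0 of_int_1)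
    moreover have "\<exists>k::int. ccw_ang Q C A = Arg w + real_of_int k*2*pi" unfolding ccw_ang_def Let_def w_def
      by (metis add_0_right mult_1 mult_zero_left of_int_0 of_int_1)
    ultimately obtain k1 k2 k3 :: int where "ccw_ang Q A B = Arg u + real_of_int k1*2*pi"
      "ccw_ang Q B C = Arg v + real_of_int k2*2*pi" "ccw_ang Q C A = Arg w + real_of_int k3*2*pi" by blast
    thus ?thesis unfolding S_def by (intro exI[of _ "k1+k2+k3"]) (simp add: algebra_simps)
  qed
  then obtain m :: int where "S = Arg u + Arg v + Arg w + real_of_int m * 2 * pi" by blast
  hence "S = real_of_int (n + m) * 2 * pi" using n by (simp add: algebra_simps)
  moreover have "0 \<le> S" "S < 6 * pi" using ccw_range[of Q A B] ccw_range[of Q B C] ccw_range[of Q C A]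
    by (auto simp: S_def)
  ultimately have hS: "S = real_of_int (n + m) * (2 * pi)" and S0: "0 \<le> S" and S6: "S < 3 * (2*pi)"
    by (simp_all only: mult.assoc)
  have A1: "0 \<le> real_of_int (n + m) * (2 * pi)" unfolding hS[symmetric] by (rule S0)
  have A2: "real_of_int (n + m) * (2*pi) < 3 * (2*pi)" unfolding hS[symmetric] by (rule S6)
  obtain k where kk: "k = real_of_int (n + m)" by blast
  have p: "0 < 2 * pi" by simp
  have "0 \<le> k" using A1 p unfolding kk[symmetric] by (metis zero_le_mult_iff not_less)
  moreover have "k < 3" using A2 p unfolding kk[symmetric] using mult_less_cancel_right_pos by blast
  ultimately have "0 \<le> n + m" "n + m < 3" unfolding kk by linarith+
  hence "n + m = 0 \<or> n + m = 1 \<or> n + m = 2" by auto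
  with hS show ?thesis unfolding S_def[symmetric] by auto
qed



definition FF :: "complex \<Rightarrow> real" where "FF z = Re z / cmod z"

lemma cos_abs_Arg: "z \<noteq> 0 \<Longrightarrow> cos \<bar>Arg z\<bar> = FF z"
  by (simp add: FF_def cos_Arg)

lemma FF_scale: "0 < c \<Longrightarrow> FF (of_real c * z) = FF z"
  by (simp add: FF_def norm_mult)

lemma FF_inv: "FF (inverse z) = FF z"
proof (cases "z = 0")
  case False
  hence "Im z * Im z + Re z * Re z \<noteq> 0"
    by (metis complex_eq_iff sum_squares_eq_zero_iff zero_complex.simps add.commute)
  with False show ?thesis by (simp add: FF_def inverse_eq_divide Re_divide norm_divide field_simps
        flip: norm_complex_def) (simp add: cmod_def power2_eq_square algebra_simps)
qed (simp add: FF_def)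

lemma g_mono:
  fixes q s1 s2 :: real
  assumes "q \<noteq> 0" "s1 < s2"
  shows "s1 / sqrt (s1^2 + q^2) < s2 / sqrt (s2^2 + q^2)"
proof -
  define a where "a = sqrt (s1^2 + q^2)"
  define b where "b = sqrt (s2^2 + q^2)"
  have q2: "0 < q^2" using assms by simp
  have a0: "0 < a" unfolding a_def using q2 by (simp add: add_nonneg_pos)
  have b0: "0 < b" unfolding b_def using q2 by (simp add: add_nonneg_pos)
  have a2: "a^2 = s1^2 + q^2" unfolding a_def using q2 by simp
  have b2: "b^2 = s2^2 + q^2" unfolding b_def using q2 by simp
  have key: "s1 * b < s2 * a"
  proof (cases "s1 < 0 \<and> 0 \<le> s2")
    case True
    then show ?thesis using a0 b0 by (smt (verit) mult_neg_pos mult_nonneg_nonneg)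
  next
    case False
    then consider "0 \<le> s1" | "s2 < 0" using assms by linarith
    then show ?thesis
    proof cases
      case 1
      have "(s1 * b)^2 < (s2 * a)^2"
      proof -
        have "s1^2 < s2^2" using 1 assms by (simp add: power_strict_mono)
        hence "s1^2 * q^2 < s2^2 * q^2" using q2 by simp
        thus ?thesis by (simp add: power_mult_distrib a2 b2 algebra_simps)
      qed
      moreover have "0 \<le> s2 * a" using 1 assms a0 by simp
      ultimately show ?thesis using power2_less_imp_less by blast
    next
      case 2
      have "(- s2 * a)^2 < (- s1 * b)^2"
      proof -
        have "(-s2)^2 < (-s1)^2" using 2 assms by (intro power_strict_mono) auto
        hence "s2^2 * q^2 < s1^2 * q^2" using q2 by simp
        thus ?thesis by (simp add: power_mult_distrib a2 b2 algebra_simps)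
      qed
      moreover have "0 \<le> - s1 * b" using 2 assms b0 by (simp add: mult_nonpos_nonneg)
      ultimately have "- s2 * a < - s1 * b" using power2_less_imp_less by blast
      thus ?thesis by simp
    qed
  qed
  show ?thesis unfolding a_def[symmetric] b_def[symmetric] using key a0 b0
    by (simp add: divide_less_eq less_divide_eq field_simps)
qed

lemma FF_shift:
  assumes "Im w \<noteq> 0" "0 < t"
  shows "FF (w - of_real t) < FF w"
proof -
  have "FF (w - of_real t) = (Re w - t) / sqrt ((Re w - t)^2 + (Im w)^2)"
    by (simp add: FF_def cmod_def)
  also have "\<dots> < Re w / sqrt ((Re w)^2 + (Im w)^2)"
    using g_mono[OF assms(1), of "Re w - t" "Re w"] assms by simp
  also have "\<dots> = FF w" by (simp add: FF_def cmod_def)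
  finally show ?thesis .
qed



lemma ang_gt:
  assumes "(Y - Q) / (X - Q) = z" "z \<noteq> 0" "FF z < cos x" "0 \<le> x" "x \<le> pi"
  shows "x < ang X Q Y"
proof -
  have b: "0 \<le> \<bar>Arg z\<bar>" "\<bar>Arg z\<bar> \<le> pi" using Arg_bounded[of z] by auto
  have "cos \<bar>Arg z\<bar> < cos x" using assms cos_abs_Arg by simp
  hence "x < \<bar>Arg z\<bar>" using cos_mono_less_eq[of "\<bar>Arg z\<bar>" x] b assms by simp
  thus ?thesis using assms(1) by (simp add: ang_def)
qed

lemma cos_ang: "X \<noteq> Q \<Longrightarrow> Y \<noteq> Q \<Longrightarrow> cos (ang X Q Y) = FF ((Y - Q) / (X - Q))"
  unfolding ang_def by (rule cos_abs_Arg) simp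

lemma nonreal_of_ang:
  assumes "\<bar>Arg z\<bar> = x" "0 < x" "x < pi"
  shows "Im z \<noteq> 0"
proof
  assume "Im z = 0"
  hence "z \<in> \<real>" by (simp add: complex_is_Real_iff)
  hence "Arg z = 0 \<or> Arg z = pi" using Arg_eq_0_pi by blast
  thus False using assms by auto
qed

lemma perturb:
  assumes Q: "Q \<notin> {X, Y, Z}" and h1: "ang X Q Y = x" and h2: "ang Y Q Z = x"
    and h3: "x < ang Z Q X" and x0: "0 < x" and xpi: "x < pi" and e: "0 < e"
  shows "\<exists>Q'. dist Q Q' < e \<and> x < ang X Q' Y \<and> x < ang Y Q' Z \<and> x < ang Z Q' X"
proof -
  define d where "d = Y - Q"
  define w where "w = (X - Q) / d"
  define v where "v = (Z - Q) / d"
  have d0: "d \<noteq> 0" using Q by (auto simp: d_def)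
  have Xw: "X - Q = w * d" and Zv: "Z - Q = v * d" using d0 by (auto simp: w_def v_def)
  have iw: "(Y - Q) / (X - Q) = inverse w" by (simp add: w_def d_def)
  have "\<bar>Arg (inverse w)\<bar> = x" using h1 iw by (simp add: ang_def)
  hence "Im (inverse w) \<noteq> 0" using nonreal_of_ang x0 xpi by blast
  hence imw: "Im w \<noteq> 0" by (metis Reals_inverse complex_is_Real_iff inverse_inverse_eq)
  have "\<bar>Arg v\<bar> = x" using h2 by (simp add: ang_def v_def d_def)
  hence imv: "Im v \<noteq> 0" using nonreal_of_ang x0 xpi by blast
  have w0: "w \<noteq> 0" and v0: "v \<noteq> 0" using imw imv by auto
  have cw: "cos x = FF w" using cos_ang[of X Q Y] Q h1 iw by (auto simp: FF_inv)
  have cv: "cos x = FF v" using cos_ang[of Y Q Z] Q h2 by (auto simp: v_def d_def)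
  have "cos (ang Z Q X) = FF (w / v)" using cos_ang[of Z Q X] Q Xw Zv d0 by auto
  moreover have "cos (ang Z Q X) < cos x"
    using h3 x0 xpi ang_ccw[of Z Q X] ccw_range[of Q Z X]
    by (subst cos_mono_less_eq) auto
  ultimately have lt3: "FF (w / v) < cos x" by simp
  have lim: "((\<lambda>t. FF ((w - of_real t) / (v - of_real t))) \<longlongrightarrow> FF (w / v)) (at_right 0)"
  proof -
    have "((\<lambda>t::real. w - of_real t) \<longlongrightarrow> w - of_real 0) (at_right 0)"
      by (intro tendsto_intros)
    hence lw: "((\<lambda>t::real. w - of_real t) \<longlongrightarrow> w) (at_right 0)" by simp
    have "((\<lambda>t::real. v - of_real t) \<longlongrightarrow> v - of_real 0) (at_right 0)"
      by (intro tendsto_intros)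
    hence lv: "((\<lambda>t::real. v - of_real t) \<longlongrightarrow> v) (at_right 0)" by simp
    show ?thesis unfolding FF_def using w0 v0 by (auto intro!: tendsto_intros lw lv)
  qed
  have ev1: "\<forall>\<^sub>F t in at_right 0. FF ((w - of_real t) / (v - of_real t)) < cos x"
    using order_tendstoD(2)[OF lim lt3] .
  have pos: "0 < min 1 (e / cmod d)" using e d0 by simp
  have ev2: "\<forall>\<^sub>F t in at_right (0::real). t < min 1 (e / cmod d)"
    using order_tendstoD(2)[OF tendsto_ident_at pos] .
  have ev3: "\<forall>\<^sub>F t in at_right (0::real). 0 < t" by (simp add: eventually_at_right_less)
  obtain t where t1: "FF ((w - of_real t) / (v - of_real t)) < cos x"
    and t2: "t < min 1 (e / cmod d)" and t0: "0 < t"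
    using eventually_happens'[OF _ eventually_conj[OF ev1 eventually_conj[OF ev2 ev3]]] by auto
  define Q' where "Q' = Q + of_real t * d"
  have YQ': "Y - Q' = of_real (1 - t) * d" by (simp add: Q'_def d_def algebra_simps)
  have XQ': "X - Q' = (w - of_real t) * d" using Xw by (simp add: Q'_def algebra_simps)
  have ZQ': "Z - Q' = (v - of_real t) * d" using Zv by (simp add: Q'_def algebra_simps)
  have wt: "w - of_real t \<noteq> 0" using imw by (metis Im_complex_of_real diff_zero right_minus_eq)
  have vt: "v - of_real t \<noteq> 0" using imv by (metis Im_complex_of_real diff_zero right_minus_eq)
  have t1': "1 - t > 0" using t2 by simp
  have "dist Q Q' = t * cmod d" using t0 by (simp add: Q'_def dist_norm norm_mult)
  also have "\<dots> < e" using t2 d0 by (simp add: less_divide_eq)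
  finally have dQ: "dist Q Q' < e" .
  have a1: "x < ang X Q' Y"
  proof (rule ang_gt)
    show "(Y - Q') / (X - Q') = of_real (1 - t) * inverse (w - of_real t)"
      unfolding YQ' XQ' using d0 wt by (simp add: field_simps)
    show "of_real (1 - t) * inverse (w - of_real t) \<noteq> 0" using t1' wt by simp
    show "FF (of_real (1 - t) * inverse (w - of_real t)) < cos x"
      using FF_scale[OF t1'] FF_inv FF_shift[OF imw t0] cw by simp
  qed (use x0 xpi in auto)
  have a2: "x < ang Y Q' Z"
  proof (rule ang_gt)
    show "(Z - Q') / (Y - Q') = of_real (1 / (1 - t)) * (v - of_real t)"
      unfolding YQ' ZQ' using d0 t1' by (simp add: field_simps)
    show "of_real (1 / (1 - t)) * (v - of_real t) \<noteq> 0" using t1' vt by simp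
    show "FF (of_real (1 / (1 - t)) * (v - of_real t)) < cos x"
      using FF_scale[of "1 / (1 - t)"] t1' FF_shift[OF imv t0] cv by simp
  qed (use x0 xpi in auto)
  have a3: "x < ang Z Q' X"
  proof (rule ang_gt)
    show "(X - Q') / (Z - Q') = (w - of_real t) / (v - of_real t)"
      unfolding XQ' ZQ' using d0 by simp
    show "(w - of_real t) / (v - of_real t) \<noteq> 0" using wt vt by simp
  qed (use t1 x0 xpi in auto)
  show ?thesis using dQ a1 a2 a3 by blast
qed



lemma helper:
  assumes Q: "Q \<notin> {X, Y, Z}" and h1: "ang X Q Y = x" and h2: "ang Y Q Z = x"
    and h3: "x < ang Z Q X" and x0: "0 < x" and xpi: "x < pi" and d: "dist P Q < r"
    and mx: "\<forall>Q'. dist P Q' \<le> r \<longrightarrow> min (ang X Q' Y) (min (ang Y Q' Z) (ang Z Q' X)) \<le> x"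
  shows False
proof -
  obtain Q' where q: "dist Q Q' < r - dist P Q" "x < ang X Q' Y" "x < ang Y Q' Z" "x < ang Z Q' X"
    using perturb[OF Q h1 h2 h3 x0 xpi, of "r - dist P Q"] d by auto
  have "dist P Q' \<le> r" using q(1) dist_triangle[of P Q' Q] by simp
  with mx q show False by auto
qed

lemma triple:
  assumes Q: "Q \<notin> {A, B, C}"
    and s: "ccw_ang Q A B + ccw_ang Q B C + ccw_ang Q C A = 2 * pi"
    and ex: "exactly_two_smallest (ccw_ang Q A B, ccw_ang Q B C, ccw_ang Q C A)"
    and mx: "\<forall>Q'. dist P Q' \<le> r \<longrightarrow> min_angle Q' A B C \<le> min_angle Q A B C"
    and d: "dist P Q < r"
  shows False
proof -
  define \<alpha> where "\<alpha> = ccw_ang Q A B"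
  define \<beta> where "\<beta> = ccw_ang Q B C"
  define \<gamma> where "\<gamma> = ccw_ang Q C A"
  have r: "0 \<le> \<alpha>" "\<alpha> < 2*pi" "0 \<le> \<beta>" "\<beta> < 2*pi" "0 \<le> \<gamma>" "\<gamma> < 2*pi"
    using ccw_range[of Q A B] ccw_range[of Q B C] ccw_range[of Q C A]
    by (auto simp: \<alpha>_def \<beta>_def \<gamma>_def)
  have aAB: "ang A Q B = min \<alpha> (2*pi - \<alpha>)" by (simp add: ang_ccw \<alpha>_def)
  have aBC: "ang B Q C = min \<beta> (2*pi - \<beta>)" by (simp add: ang_ccw \<beta>_def)
  have aCA: "ang C Q A = min \<gamma> (2*pi - \<gamma>)" by (simp add: ang_ccw \<gamma>_def)
  have s': "\<alpha> + \<beta> + \<gamma> = 2*pi" using s by (simp add: \<alpha>_def \<beta>_def \<gamma>_def)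
  have ma: "min_angle Q' A B C = min (ang A Q' B) (min (ang B Q' C) (ang C Q' A))" for Q'
    by (simp add: min_angle_def)
  from ex consider "\<alpha> = \<beta>" "\<alpha> < \<gamma>" | "\<beta> = \<gamma>" "\<beta> < \<alpha>" | "\<alpha> = \<gamma>" "\<alpha> < \<beta>"
    unfolding exactly_two_smallest_def \<alpha>_def[symmetric] \<beta>_def[symmetric] \<gamma>_def[symmetric] by auto
  then show False
  proof cases
    case 1
    have e: "ang A Q B = \<alpha>" "ang B Q C = \<alpha>" "\<alpha> < ang C Q A" "0 < \<alpha>" "\<alpha> < pi"
      using 1 r s' aAB aBC aCA by (auto simp: min_def)
    show False
    proof (rule helper[of Q A B C \<alpha> P r])
      show "\<forall>Q'. dist P Q' \<le> r \<longrightarrow> min (ang A Q' B) (min (ang B Q' C) (ang C Q' A)) \<le> \<alpha>"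
      proof -
        have m: "min_angle Q A B C = \<alpha>" using e by (simp add: min_angle_def min_def)
        show ?thesis using mx unfolding m by (simp add: min_angle_def min.commute min.left_commute min.assoc)
      qed
    qed (use Q e d in auto)
  next
    case 2
    have e: "ang B Q C = \<beta>" "ang C Q A = \<beta>" "\<beta> < ang A Q B" "0 < \<beta>" "\<beta> < pi"
      using 2 r s' aAB aBC aCA by (auto simp: min_def)
    show False
    proof (rule helper[of Q B C A \<beta> P r])
      show "\<forall>Q'. dist P Q' \<le> r \<longrightarrow> min (ang B Q' C) (min (ang C Q' A) (ang A Q' B)) \<le> \<beta>"
      proof -
        have m: "min_angle Q A B C = \<beta>" using e by (simp add: min_angle_def min_def)
        show ?thesis using mx unfolding m by (simp add: min_angle_def min.commute min.left_commute min.assoc)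
      qed
    qed (use Q e d in auto)
  next
    case 3
    have e: "ang C Q A = \<alpha>" "ang A Q B = \<alpha>" "\<alpha> < ang B Q C" "0 < \<alpha>" "\<alpha> < pi"
      using 3 r s' aAB aBC aCA by (auto simp: min_def)
    show False
    proof (rule helper[of Q C A B \<alpha> P r])
      show "\<forall>Q'. dist P Q' \<le> r \<longrightarrow> min (ang C Q' A) (min (ang A Q' B) (ang B Q' C)) \<le> \<alpha>"
      proof -
        have m: "min_angle Q A B C = \<alpha>" using e by (simp add: min_angle_def min_def)
        show ?thesis using mx unfolding m by (simp add: min_angle_def min.commute min.left_commute min.assoc)
      qed
    qed (use Q e d in auto)
  qed
qed

lemma min_angle_swap: "min_angle Q A C B = min_angle Q A B C"
  unfolding min_angle_def using ang_sym[of A Q C] ang_sym[of C Q B] ang_sym[of B Q A]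
  by (simp add: min_def)

theorem lemma1:
  fixes P A B C Pstar :: complex and r :: real
  assumes "r > 0"
    and "dist P Pstar \<le> r"
    and "\<forall>Q. dist P Q \<le> r \<longrightarrow> min_angle Q A B C \<le> min_angle Pstar A B C"
    and "Pstar \<notin> {A, B, C}"
    and "exactly_two_smallest (consec_angles Pstar A B C)"
  shows "dist P Pstar = r"
proof (rule ccontr)
  assume "dist P Pstar \<noteq> r"
  with assms(2) have d: "dist P Pstar < r" by simp
  show False
  proof (cases "ccw_ang Pstar A B + ccw_ang Pstar B C + ccw_ang Pstar C A = 2 * pi")
    case True
    show False
      by (rule triple[OF assms(4) True _ assms(3) d])
         (use assms(5) True in \<open>simp add: consec_angles_def\<close>)
  next
    case False
    have ex: "exactly_two_smallest (ccw_ang Pstar A C, ccw_ang Pstar C B, ccw_ang Pstar B A)"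
      using assms(5) False by (simp add: consec_angles_def)
    have S: "ccw_ang Pstar A B + ccw_ang Pstar B C + ccw_ang Pstar C A \<in> {0, 2*pi, 4*pi}"
      using ccw_sum[OF assms(4)] .
    have r: "0 \<le> ccw_ang Pstar A B" "ccw_ang Pstar A B < 2*pi"
      "0 \<le> ccw_ang Pstar B C" "ccw_ang Pstar B C < 2*pi"
      "0 \<le> ccw_ang Pstar C A" "ccw_ang Pstar C A < 2*pi"
      using ccw_range by auto
    have sw: "ccw_ang Pstar A C = (if ccw_ang Pstar C A = 0 then 0 else 2*pi - ccw_ang Pstar C A)"
      "ccw_ang Pstar C B = (if ccw_ang Pstar B C = 0 then 0 else 2*pi - ccw_ang Pstar B C)"
      "ccw_ang Pstar B A = (if ccw_ang Pstar A B = 0 then 0 else 2*pi - ccw_ang Pstar A B)"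
      using ccw_swap by blast+
    have s2: "ccw_ang Pstar A C + ccw_ang Pstar C B + ccw_ang Pstar B A = 2 * pi"
    proof (cases "ccw_ang Pstar A B + ccw_ang Pstar B C + ccw_ang Pstar C A = 0")
      case True
      hence "ccw_ang Pstar A B = 0" "ccw_ang Pstar B C = 0" "ccw_ang Pstar C A = 0" using r by linarith+
      hence "ccw_ang Pstar A C = 0" "ccw_ang Pstar C B = 0" "ccw_ang Pstar B A = 0" using sw by auto
      with ex have False by (simp add: exactly_two_smallest_def)
      thus ?thesis ..
    next
      case F2: False
      with S False have "ccw_ang Pstar A B + ccw_ang Pstar B C + ccw_ang Pstar C A = 4*pi" by auto
      hence "ccw_ang Pstar A B \<noteq> 0" "ccw_ang Pstar B C \<noteq> 0" "ccw_ang Pstar C A \<noteq> 0" using r by linarith+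
      with \<open>_ = 4*pi\<close> show ?thesis using sw by simp
    qed
    have Q: "Pstar \<notin> {A, C, B}" using assms(4) by auto
    have mx: "\<forall>Q. dist P Q \<le> r \<longrightarrow> min_angle Q A C B \<le> min_angle Pstar A C B"
      using assms(3) by (simp add: min_angle_swap)
    show False by (rule triple[OF Q s2 ex mx d])
  qed
qed

end
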